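(* Let $\mathcal{G}\subset\mathcal{S}$ be closed under convolution (i.e. $f*F\in\mathcal{G}$ whenever $f,F\in\mathcal{G}$), and let $\mathcal{G}_H^0$ be its harmonic analogue. Then: (i) for every $f\in\mathcal{G}_H^0$, $f*f\in\mathcal{G}_H^0$; (ii) if $(f+F)/2\in\mathcal{G}$ for all $f,F\in\mathcal{G}$, then $\mathcal{G}_H^0$ is closed under convolution, i.e. $f_1*f_2\in\mathcal{G}_H^0$ for all $f_1,f_2\in\mathcal{G}_H^0$.
   Context: $\mathbb{D}$ is the open unit disk. $\mathcal{S}$ is the class of analytic univalent functions $f$ in $\mathbb{D}$ with $f(0)=0$, $f'(0)=1$. For $\mathcal{G}\subset\mathcal{S}$, its harmonic analogue $\mathcal{G}_H^0$ is the class of harmonic functions $f=h+\bar g$ ($h,g$ analytic in $\mathbb{D}$) such that $h+\epsilon g\in\mathcal{G}$ for every $\epsilon\in\mathbb{C}$ with $|\epsilon|=1$. For analytic $f(z)=\sum a_nz^n$, $F(z)=\sum A_nz^n$, the convolution (Hadamard product) is $(f*F)(z)=\sum a_nA_nz^n$. For harmonic $f=h+\bar g$, $F=H+\bar G$, the harmonic convolution is $f*F=h*H+\overline{g*G}$. *)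

theory Defs
  imports "HOL-Analysis.Analysis"
begin

abbreviation unit_disk :: "complex set" where
  "unit_disk \<equiv> ball 0 1"

text \<open>The class S of normalized univalent analytic functions on the unit disk.
  Functions are HOL functions complex => complex; only their values on the disk matter.\<close>
definition classS :: "(complex \<Rightarrow> complex) set" where
  "classS = {f. f holomorphic_on unit_disk \<and> inj_on f unit_disk \<and> f 0 = 0 \<and> deriv f 0 = 1}"

definition mem_D :: "(complex \<Rightarrow> complex) \<Rightarrow> (complex \<Rightarrow> complex) set \<Rightarrow> bool" where
  "mem_D h G \<longleftrightarrow> (\<exists>k\<in>G. \<forall>z\<in>unit_disk. k z = h z)"

definition coef :: "(complex \<Rightarrow> complex) \<Rightarrow> nat \<Rightarrow> complex" where
  "coef f n = (deriv ^^ n) f 0 / of_nat (fact n)"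

text \<open>Hadamard product (convolution) of analytic functions on the disk
  (set to 0 outside the disk, where it is irrelevant).\<close>
definition hconv :: "(complex \<Rightarrow> complex) \<Rightarrow> (complex \<Rightarrow> complex) \<Rightarrow> complex \<Rightarrow> complex" where
  "hconv f F z = (if z \<in> unit_disk then (\<Sum>n. coef f n * coef F n * z ^ n) else 0)"

text \<open>A harmonic function f = h + conj g is represented by the pair (h, g).
  Harmonic analogue of G: h, g analytic in D and h + eps*g in G for all |eps| = 1.\<close>
definition harm :: "(complex \<Rightarrow> complex) set \<Rightarrow> ((complex \<Rightarrow> complex) \<times> (complex \<Rightarrow> complex)) set" where
  "harm G = {(h, g). h holomorphic_on unit_disk \<and> g holomorphic_on unit_disk \<and>
     (\<forall>\<epsilon>::complex. cmod \<epsilon> = 1 \<longrightarrow> mem_D (\<lambda>z. h z + \<epsilon> * g z) G)}"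

text \<open>Harmonic convolution: (h + conj g) * (H + conj G) = h*H + conj (g*G).\<close>
definition hconvH :: "((complex \<Rightarrow> complex) \<times> (complex \<Rightarrow> complex)) \<Rightarrow>
    ((complex \<Rightarrow> complex) \<times> (complex \<Rightarrow> complex)) \<Rightarrow> ((complex \<Rightarrow> complex) \<times> (complex \<Rightarrow> complex))" where
  "hconvH p q = (hconv (fst p) (fst q), hconv (snd p) (snd q))"

end

theory Submission
  imports Defs "HOL-Complex_Analysis.Complex_Analysis"
begin

lemma abs_sum_coef:
  assumes h: "h holomorphic_on unit_disk" and w: "norm w < 1"
  shows "summable (\<lambda>n. norm (coef h n * w^n))"
proof -
  have "conv_radius (coef h) \<ge> 1"
  proof (rule conv_radius_geI_ex')
    fix r :: real assume r: "0 < r" "ereal r < 1"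
    then have "of_real r \<in> unit_disk" by simp
    from holomorphic_power_series[OF h this]
    show "summable (\<lambda>n. coef h n * of_real r ^ n)"
      by (simp add: coef_def sums_summable)
  qed
  moreover have "ereal (norm w) < 1" using w by simp
  ultimately show ?thesis
    by (intro abs_summable_in_conv_radius) (meson less_le_trans)
qed

lemma summable_hprod:
  assumes h: "h holomorphic_on unit_disk" and g: "g holomorphic_on unit_disk" and z: "norm z < 1"
  shows "summable (\<lambda>n. coef h n * coef g n * z^n)"
proof -
  define s where "s = sqrt (norm z)"
  have s0: "s \<ge> 0" and s1: "s < 1" using z by (auto simp: s_def)
  have ns: "norm (complex_of_real s) < 1" using s0 s1 by simp
  have sh: "summable (\<lambda>n. norm (coef h n * of_real s^n))" by (rule abs_sum_coef[OF h ns])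
  have sg: "summable (\<lambda>n. norm (coef g n * of_real s^n))" by (rule abs_sum_coef[OF g ns])
  have "(\<lambda>n. norm (coef h n * of_real s^n)) \<longlonglongrightarrow> 0" by (rule summable_LIMSEQ_zero[OF sh])
  then have "Bseq (\<lambda>n. norm (coef h n * of_real s^n))" by (rule convergent_imp_Bseq[OF convergentI])
  then obtain M where M: "M > 0" "\<And>n. norm (norm (coef h n * of_real s^n)) \<le> M" by (auto elim: BseqE)
  have eq: "norm (coef h n * coef g n * z^n) = norm (coef h n * of_real s^n) * norm (coef g n * of_real s^n)" for n
  proof -
    have "norm z = s * s" using s0 by (simp add: s_def)
    then have "norm z ^ n = s^n * s^n" by (simp add: power_mult_distrib)
    then show ?thesis using s0 by (simp add: norm_mult norm_power abs_mult)
  qed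
  have "summable (\<lambda>n. M * norm (coef g n * of_real s^n))" using sg by (rule summable_mult)
  then have "summable (\<lambda>n. norm (coef h n * coef g n * z^n))"
  proof (rule summable_comparison_test'[where N=0])
    fix n :: nat
    have "norm (norm (coef h n * coef g n * z^n)) = norm (coef h n * of_real s^n) * norm (coef g n * of_real s^n)"
      using eq by simp
    also have "\<dots> \<le> M * norm (coef g n * of_real s^n)"
      using M(2)[of n] by (intro mult_right_mono) auto
    finally show "norm (norm (coef h n * coef g n * z^n)) \<le> M * norm (coef g n * of_real s^n)" .
  qed
  then show ?thesis by (rule summable_norm_cancel)
qed

lemma coef_lin:
  assumes a: "a holomorphic_on unit_disk" and b: "b holomorphic_on unit_disk"
  shows "coef (\<lambda>z. a z + c * b z) n = coef a n + c * coef b n"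
proof -
  have cb: "(\<lambda>z. c * b z) holomorphic_on unit_disk" using b by (intro holomorphic_intros)
  have "(deriv ^^ n) (\<lambda>z. a z + c * b z) 0 = (deriv ^^ n) a 0 + (deriv ^^ n) (\<lambda>z. c * b z) 0"
    by (rule higher_deriv_add[OF a cb]) auto
  also have "(deriv ^^ n) (\<lambda>z. c * b z) 0 = c * (deriv ^^ n) b 0"
    by (rule higher_deriv_cmult[OF b]) auto
  finally show ?thesis by (simp add: coef_def add_divide_distrib)
qed

lemma coef_cong:
  assumes "\<forall>z\<in>unit_disk. f z = g z"
  shows "coef f n = coef g n"
proof -
  have "eventually (\<lambda>x. f x = g x) (nhds 0)"
    using assms by (intro eventually_nhds_in_open[of unit_disk, THEN eventually_mono]) auto
  then have "(deriv ^^ n) f 0 = (deriv ^^ n) g 0" by (rule higher_deriv_cong_ev) simp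
  then show ?thesis by (simp add: coef_def)
qed

lemma hconv_cong:
  assumes "\<forall>z\<in>unit_disk. f z = f' z" "\<forall>z\<in>unit_disk. F z = F' z"
  shows "hconv f F = hconv f' F'"
  using coef_cong[OF assms(1)] coef_cong[OF assms(2)] by (simp add: hconv_def fun_eq_iff)

lemma hconv_comm: "hconv f F = hconv F f"
  by (simp add: hconv_def fun_eq_iff mult.commute mult.left_commute)

lemma hconv_bilin:
  assumes a: "a holomorphic_on unit_disk" and b: "b holomorphic_on unit_disk"
    and c: "c holomorphic_on unit_disk" and d: "d holomorphic_on unit_disk"
    and z: "z \<in> unit_disk"
  shows "hconv (\<lambda>z. a z + \<alpha> * b z) (\<lambda>z. c z + \<beta> * d z) z =
         hconv a c z + \<beta> * hconv a d z + \<alpha> * hconv b c z + \<alpha> * \<beta> * hconv b d z"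
proof -
  have nz: "norm z < 1" using z by simp
  let ?t = "\<lambda>f g n. coef f n * coef g n * z^n"
  have s1: "?t a c sums (\<Sum>n. ?t a c n)" by (rule summable_sums[OF summable_hprod[OF a c nz]])
  have s2: "?t a d sums (\<Sum>n. ?t a d n)" by (rule summable_sums[OF summable_hprod[OF a d nz]])
  have s3: "?t b c sums (\<Sum>n. ?t b c n)" by (rule summable_sums[OF summable_hprod[OF b c nz]])
  have s4: "?t b d sums (\<Sum>n. ?t b d n)" by (rule summable_sums[OF summable_hprod[OF b d nz]])
  have "(\<lambda>n. ?t a c n + \<beta> * ?t a d n + \<alpha> * ?t b c n + \<alpha> * \<beta> * ?t b d n) sums
        ((\<Sum>n. ?t a c n) + \<beta> * (\<Sum>n. ?t a d n) + \<alpha> * (\<Sum>n. ?t b c n) + \<alpha> * \<beta> * (\<Sum>n. ?t b d n))"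
    by (intro sums_add sums_mult s1 s2 s3 s4)
  moreover have "(\<lambda>n. ?t a c n + \<beta> * ?t a d n + \<alpha> * ?t b c n + \<alpha> * \<beta> * ?t b d n) =
     (\<lambda>n. coef (\<lambda>z. a z + \<alpha> * b z) n * coef (\<lambda>z. c z + \<beta> * d z) n * z^n)"
    by (simp add: coef_lin[OF a b] coef_lin[OF c d] fun_eq_iff algebra_simps)
  ultimately show ?thesis using z by (simp add: hconv_def sums_iff)
qed


lemma G_holo: "G \<subseteq> classS \<Longrightarrow> k \<in> G \<Longrightarrow> k holomorphic_on unit_disk"
  by (auto simp: classS_def)

lemma mem_D_trans: "mem_D f G \<Longrightarrow> (\<And>z. z \<in> unit_disk \<Longrightarrow> f z = g z) \<Longrightarrow> mem_D g G"
  by (auto simp: mem_D_def)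

lemma key_holo:
  assumes G: "G \<subseteq> classS" and m: "\<forall>\<epsilon>::complex. cmod \<epsilon> = 1 \<longrightarrow> mem_D (\<lambda>z. P z + \<epsilon> * Q z) G"
  shows "P holomorphic_on unit_disk \<and> Q holomorphic_on unit_disk"
proof -
  obtain k1 where k1: "k1 \<in> G" "\<forall>z\<in>unit_disk. k1 z = P z + 1 * Q z"
    using m[rule_format, of 1] by (auto simp: mem_D_def)
  obtain k2 where k2: "k2 \<in> G" "\<forall>z\<in>unit_disk. k2 z = P z + (-1) * Q z"
    using m[rule_format, of "-1"] by (auto simp: mem_D_def)
  have h1: "k1 holomorphic_on unit_disk" "k2 holomorphic_on unit_disk"
    using G_holo[OF G] k1 k2 by auto
  have "(\<lambda>z. (k1 z + k2 z) / 2) holomorphic_on unit_disk" using h1 by (intro holomorphic_intros) auto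
  then have "P holomorphic_on unit_disk"
    by (rule holomorphic_transform) (use k1 k2 in auto)
  moreover have "(\<lambda>z. (k1 z - k2 z) / 2) holomorphic_on unit_disk" using h1 by (intro holomorphic_intros) auto
  then have "Q holomorphic_on unit_disk"
    by (rule holomorphic_transform) (use k1 k2 in auto)
  ultimately show ?thesis by blast
qed

lemma harmI:
  assumes G: "G \<subseteq> classS" and m: "\<And>\<epsilon>::complex. cmod \<epsilon> = 1 \<Longrightarrow> mem_D (\<lambda>z. P z + \<epsilon> * Q z) G"
  shows "(P, Q) \<in> harm G"
  using key_holo[OF G] m by (auto simp: harm_def)

lemma harm_get:
  assumes "(h, g) \<in> harm G" "cmod \<epsilon> = 1"
  obtains k where "k \<in> G" "\<forall>z\<in>unit_disk. k z = h z + \<epsilon> * g z"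
  using assms by (auto simp: harm_def mem_D_def)

theorem theorem2p9:
  fixes G :: "(complex \<Rightarrow> complex) set"
  assumes "G \<subseteq> classS"
    and "\<forall>f\<in>G. \<forall>F\<in>G. mem_D (hconv f F) G"
  shows "(\<forall>p\<in>harm G. hconvH p p \<in> harm G) \<and>
         ((\<forall>f\<in>G. \<forall>F\<in>G. mem_D (\<lambda>z. (f z + F z) / 2) G) \<longrightarrow>
            (\<forall>p1\<in>harm G. \<forall>p2\<in>harm G. hconvH p1 p2 \<in> harm G))"
proof (intro conjI ballI impI)
  fix p assume p: "p \<in> harm G"
  obtain h g where hg: "p = (h, g)" by (cases p)
  have ph: "(h, g) \<in> harm G" using p hg by simp
  have hh: "h holomorphic_on unit_disk" "g holomorphic_on unit_disk" using ph by (auto simp: harm_def)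
  have "(hconv h h, hconv g g) \<in> harm G"
  proof (rule harmI[OF assms(1)])
    fix \<epsilon> :: complex assume e: "cmod \<epsilon> = 1"
    define \<eta> where "\<eta> = csqrt (- \<epsilon>)"
    have n1: "cmod \<eta> = 1" "cmod (-\<eta>) = 1" using e by (auto simp: \<eta>_def)
    have eta2: "\<eta> * \<eta> = - \<epsilon>" unfolding \<eta>_def by (metis power2_csqrt power2_eq_square)
    obtain k1 where k1: "k1 \<in> G" "\<forall>z\<in>unit_disk. k1 z = h z + \<eta> * g z"
      using harm_get[OF ph n1(1)] by blast
    obtain k2 where k2: "k2 \<in> G" "\<forall>z\<in>unit_disk. k2 z = h z + (-\<eta>) * g z"
      using harm_get[OF ph n1(2)] by blast
    have m: "mem_D (hconv k1 k2) G" using assms(2) k1 k2 by blast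
    have eq: "hconv k1 k2 = hconv (\<lambda>z. h z + \<eta> * g z) (\<lambda>z. h z + (-\<eta>) * g z)"
      by (rule hconv_cong) (use k1 k2 in auto)
    show "mem_D (\<lambda>z. hconv h h z + \<epsilon> * hconv g g z) G"
    proof (rule mem_D_trans[OF m])
      fix z assume z: "z \<in> unit_disk"
      have "hconv k1 k2 z = hconv h h z + (-\<eta>) * hconv h g z + \<eta> * hconv g h z + \<eta> * (-\<eta>) * hconv g g z"
        unfolding eq by (rule hconv_bilin[OF hh(1) hh(2) hh(1) hh(2) z])
      also have "\<dots> = hconv h h z + \<epsilon> * hconv g g z"
        using eta2 hconv_comm[of h g] by (simp add: algebra_simps)
      finally show "hconv k1 k2 z = hconv h h z + \<epsilon> * hconv g g z" .
    qed
  qed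
  then show "hconvH p p \<in> harm G" by (simp add: hconvH_def hg)
next
  fix p1 p2 assume avg: "\<forall>f\<in>G. \<forall>F\<in>G. mem_D (\<lambda>z. (f z + F z) / 2) G"
    and p1: "p1 \<in> harm G" and p2: "p2 \<in> harm G"
  obtain h1 g1 where hg1: "p1 = (h1, g1)" by (cases p1)
  obtain h2 g2 where hg2: "p2 = (h2, g2)" by (cases p2)
  have ph1: "(h1, g1) \<in> harm G" using p1 hg1 by simp
  have ph2: "(h2, g2) \<in> harm G" using p2 hg2 by simp
  have hh: "h1 holomorphic_on unit_disk" "g1 holomorphic_on unit_disk"
     "h2 holomorphic_on unit_disk" "g2 holomorphic_on unit_disk" using ph1 ph2 by (auto simp: harm_def)
  have "(hconv h1 h2, hconv g1 g2) \<in> harm G"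
  proof (rule harmI[OF assms(1)])
    fix \<epsilon> :: complex assume e: "cmod \<epsilon> = 1"
    have n1: "cmod (1::complex) = 1" "cmod (-1::complex) = 1" "cmod (-\<epsilon>) = 1" using e by auto
    obtain k1 where k1: "k1 \<in> G" "\<forall>z\<in>unit_disk. k1 z = h1 z + 1 * g1 z"
      using harm_get[OF ph1 n1(1)] by blast
    obtain k2 where k2: "k2 \<in> G" "\<forall>z\<in>unit_disk. k2 z = h2 z + \<epsilon> * g2 z"
      using harm_get[OF ph2 e] by blast
    obtain k3 where k3: "k3 \<in> G" "\<forall>z\<in>unit_disk. k3 z = h1 z + (-1) * g1 z"
      using harm_get[OF ph1 n1(2)] by blast
    obtain k4 where k4: "k4 \<in> G" "\<forall>z\<in>unit_disk. k4 z = h2 z + (-\<epsilon>) * g2 z"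
      using harm_get[OF ph2 n1(3)] by blast
    obtain m1 where m1: "m1 \<in> G" "\<forall>z\<in>unit_disk. m1 z = hconv k1 k2 z"
      using assms(2) k1 k2 unfolding mem_D_def by blast
    obtain m2 where m2: "m2 \<in> G" "\<forall>z\<in>unit_disk. m2 z = hconv k3 k4 z"
      using assms(2) k3 k4 unfolding mem_D_def by blast
    have m: "mem_D (\<lambda>z. (m1 z + m2 z) / 2) G" using avg m1 m2 by blast
    have eq1: "hconv k1 k2 = hconv (\<lambda>z. h1 z + 1 * g1 z) (\<lambda>z. h2 z + \<epsilon> * g2 z)"
      by (rule hconv_cong) (use k1 k2 in auto)
    have eq2: "hconv k3 k4 = hconv (\<lambda>z. h1 z + (-1) * g1 z) (\<lambda>z. h2 z + (-\<epsilon>) * g2 z)"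
      by (rule hconv_cong) (use k3 k4 in auto)
    show "mem_D (\<lambda>z. hconv h1 h2 z + \<epsilon> * hconv g1 g2 z) G"
    proof (rule mem_D_trans[OF m])
      fix z assume z: "z \<in> unit_disk"
      have a: "hconv k1 k2 z = hconv h1 h2 z + \<epsilon> * hconv h1 g2 z + 1 * hconv g1 h2 z + 1 * \<epsilon> * hconv g1 g2 z"
        unfolding eq1 by (rule hconv_bilin[OF hh(1) hh(2) hh(3) hh(4) z])
      have b: "hconv k3 k4 z = hconv h1 h2 z + (-\<epsilon>) * hconv h1 g2 z + (-1) * hconv g1 h2 z + (-1) * (-\<epsilon>) * hconv g1 g2 z"
        unfolding eq2 by (rule hconv_bilin[OF hh(1) hh(2) hh(3) hh(4) z])
      show "(m1 z + m2 z) / 2 = hconv h1 h2 z + \<epsilon> * hconv g1 g2 z"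
        using m1(2) m2(2) z a b by (simp add: field_simps)
    qed
  qed
  then show "hconvH p1 p2 \<in> harm G" by (simp add: hconvH_def hg1 hg2)
qed

end
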